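(* Let $q>1$, $0<u<1$ and let $k\ge1$ be an integer. Then \[ \sum_{\lambda:\lambda'_1=k}N_{u,q}(\lambda)=\frac{u^{k-1}}{|A(k-1,q)|}\cdot\frac{\prod_{r=1}^\infty(1-u/q^r)}{\prod_{r=1}^k(1-u/q^r)}, \] the sum being over partitions with exactly $k$ parts.
   Context: $|A(k-1,q)|=q^{k-1}\prod_{i=0}^{k-2}(q^{k-1}-q^i)$ (the order of the affine group $A(k-1,q)$ when $q$ is a prime power). $\lambda'_1$ is the number of parts of $\lambda$. $N_{u,q}(\lambda)=\prod_{r\ge1}(1-u/q^r)\frac{u^{|\lambda|-1}(q^{\lambda'_1}-1)}{\prod_i q^{(\lambda'_i)^2}(\frac1q)_{m_i(\lambda)}}$ for partitions of positive integers, with $\lambda'$ the conjugate partition, $m_i(\lambda)$ the multiplicity of part $i$, $(\frac1q)_i=\prod_{j=1}^i(1-q^{-j})$. *)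

theory Defs
  imports "HOL-Analysis.Analysis" "HOL-Library.Multiset"
begin

text \<open>A partition is represented as the multiset of its (positive) parts.\<close>
definition is_partition :: "nat multiset \<Rightarrow> bool" where
  "is_partition lam \<longleftrightarrow> 0 \<notin># lam"

definition psize :: "nat multiset \<Rightarrow> nat" where
  "psize lam = sum_mset lam"

text \<open>Conjugate partition: the i-th part of the conjugate is the number of parts \<ge> i.\<close>
definition conj_part :: "nat multiset \<Rightarrow> nat \<Rightarrow> nat" where
  "conj_part lam i = size (filter_mset (%x. i \<le> x) lam)"

definition mult_part :: "nat multiset \<Rightarrow> nat \<Rightarrow> nat" where
  "mult_part lam i = count lam i"

definition qpoch_inv :: "real \<Rightarrow> nat \<Rightarrow> real" where
  "qpoch_inv q i = (\<Prod>j=1..i. 1 - 1 / q ^ j)"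

definition Pinf :: "real \<Rightarrow> real \<Rightarrow> real" where
  "Pinf u q = (\<Prod>r. 1 - u / q ^ Suc r)"

text \<open>N_{u,q}(lambda). Products over i range over i = 1..(largest part);
  for larger i the factors equal 1.\<close>
definition N_uq :: "real \<Rightarrow> real \<Rightarrow> nat multiset \<Rightarrow> real" where
  "N_uq u q lam = Pinf u q * (u ^ (psize lam - 1) * (q ^ conj_part lam 1 - 1)) /
     (\<Prod>i\<in>{1..Max_mset lam}. q ^ ((conj_part lam i)\<^sup>2) * qpoch_inv q (mult_part lam i))"

definition affine_order :: "nat \<Rightarrow> real \<Rightarrow> real" where
  "affine_order n q = q ^ n * (\<Prod>i<n. q ^ n - q ^ i)"

end

theory Submission imports Defs begin

definition pt :: "real \<Rightarrow> nat \<Rightarrow> real" where "pt t n = (\<Prod>j=1..n. 1 - t^j)"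
definition EE :: "real \<Rightarrow> real \<Rightarrow> nat \<Rightarrow> nat \<Rightarrow> real" where
  "EE t a j k = (\<Prod>r\<in>{Suc j..k}. 1 - a * t^r)"
definition HH :: "real \<Rightarrow> real \<Rightarrow> nat \<Rightarrow> real" where
  "HH t a k = (\<Sum>j\<le>k. a^j * t^(j^2) * EE t a j k / (pt t j * pt t (k-j)))"

lemma pt_0[simp]: "pt t 0 = 1" by (simp add: pt_def)
lemma pt_Suc: "pt t (Suc n) = pt t n * (1 - t^Suc n)"
  by (simp add: pt_def prod.nat_ivl_Suc')
lemma pt_pos: "0 < t \<Longrightarrow> t < 1 \<Longrightarrow> pt t n > 0"
proof (induction n)
  case (Suc n) have "t^Suc n < 1" using Suc.prems by (simp only: power_Suc_less_one)
  then show ?case using Suc mult_pos_pos by (simp add: pt_Suc)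
qed simp

lemma pascal_aux:
  fixes A B x y :: real
  assumes "A \<noteq> 0" "B \<noteq> 0" "1 - x \<noteq> 0" "1 - y \<noteq> 0"
  shows "(1 - y * x) / ((A * (1 - x)) * (B * (1 - y))) = 1 / ((A * (1 - x)) * B) + y / (A * (B * (1 - y)))"
proof -
  define a where "a = 1 - x"
  define b where "b = 1 - y"
  have "a \<noteq> 0" "b \<noteq> 0" using assms a_def b_def by auto
  moreover have "1 - y * x = b + y * a" unfolding a_def b_def by (simp add: algebra_simps)
  ultimately show ?thesis using assms unfolding a_def[symmetric] b_def[symmetric] by (simp add: field_simps)
qed

lemma pascal:
  assumes t: "0 < t" "t < 1" and j: "j \<le> Suc k"
  shows "(1 - t^Suc k) / (pt t j * pt t (Suc k - j)) =
     (if j \<le> k then 1 / (pt t j * pt t (k - j)) else 0) +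
     (if 1 \<le> j then t^(Suc k - j) / (pt t (j - 1) * pt t (Suc k - j)) else 0)"
proof -
  have p: "\<And>n. pt t n > 0" using pt_pos t by blast
  have ne: "\<And>n. 1 - t^Suc n \<noteq> 0" proof -
    fix n have "t^Suc n < 1" using t by (rule power_Suc_less_one)
    then show "1 - t^Suc n \<noteq> 0" by linarith
  qed
  consider "j = 0" | "j = Suc k" | i where "j = Suc i" "i < k" proof -
    assume a: "j = 0 \<Longrightarrow> thesis" "j = Suc k \<Longrightarrow> thesis" "\<And>i. j = Suc i \<Longrightarrow> i < k \<Longrightarrow> thesis"
    show thesis proof (cases j)
      case 0 then show ?thesis using a(1) by blast
    next
      case (Suc i) then show ?thesis using a(2,3) j by (cases "i < k") auto
    qed
  qed
  then show ?thesis
  proof cases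
    case 1 then show ?thesis using p[of k] ne[of k] by (simp add: pt_Suc field_simps)
  next
    case 2 then show ?thesis using p[of k] ne[of k] by (simp add: pt_Suc field_simps)
  next
    case 3
    then obtain m where k: "k = Suc (i + m)" by (metis less_imp_Suc_add)
    have e1: "Suc k - j = Suc m" using 3 k by simp
    have e2: "k - j = m" using 3 k by simp
    have pw: "t ^ Suc k = t^Suc m * t^Suc i" using k by (simp add: power_add[symmetric] add.commute)
    have "(1 - t^Suc k) / (pt t j * pt t (Suc k - j)) = 1 / ((pt t i * (1 - t^Suc i)) * pt t m) + t^Suc m / (pt t i * (pt t m * (1 - t^Suc m)))"
      unfolding e1 pw unfolding 3 pt_Suc by (rule pascal_aux) (use p[of i] p[of m] ne[of i] ne[of m] in auto)
    then show ?thesis using 3 unfolding e1 e2 by (simp add: pt_Suc)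
  qed
qed

lemma EE_Suc: "j \<le> k \<Longrightarrow> EE t a j (Suc k) = EE t a j k * (1 - a * t^Suc k)"
  unfolding EE_def by (subst prod.nat_ivl_Suc') auto

lemma EE_shift: "EE t a (Suc i) (Suc k) = EE t (a * t) i k"
  unfolding EE_def by (subst prod.shift_bounds_cl_Suc_ivl) (simp add: mult.assoc)

lemma pow_aux:
  fixes a t :: real
  assumes "i \<le> k"
  shows "a^(Suc i) * t^((Suc i)^2) * t^(Suc k - Suc i) = a * t^(Suc k) * ((a*t)^i * t^(i^2))"
proof -
  obtain d where k: "k = i + d" using assms le_Suc_ex by blast
  have e: "(Suc i)^2 = i^2 + i + Suc i" by (simp add: power2_eq_square)
  show ?thesis unfolding k e by (simp add: power_add power_mult_distrib algebra_simps)
qed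

lemma HH_eq:
  assumes t: "0 < t" "t < 1"
  shows "HH t a k = 1 / pt t k"
proof (induction k arbitrary: a)
  case 0
  then show ?case by (simp add: HH_def EE_def)
next
  case (Suc k)
  have p: "\<And>n. pt t n > 0" using pt_pos t by blast
  have ne: "1 - t^Suc k \<noteq> 0" proof -
    have "t^Suc k < 1" using t by (rule power_Suc_less_one)
    then show "1 - t^Suc k \<noteq> 0" by linarith
  qed
  define TA where "TA j = (if j \<le> k then a^j * t^(j^2) * EE t a j (Suc k) / (pt t j * pt t (k - j)) else 0)" for j
  define TB where "TB j = (if 1 \<le> j then a^j * t^(j^2) * EE t a j (Suc k) * t^(Suc k - j) / (pt t (j - 1) * pt t (Suc k - j)) else 0)" for j
  have "(1 - t^Suc k) * HH t a (Suc k) = (\<Sum>j\<le>Suc k. a^j * t^(j^2) * EE t a j (Suc k) * ((1 - t^Suc k) / (pt t j * pt t (Suc k - j))))"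
    unfolding HH_def sum_distrib_left by (intro sum.cong) auto
  also have "\<dots> = (\<Sum>j\<le>Suc k. TA j + TB j)"
  proof (intro sum.cong refl)
    fix j assume "j \<in> {..Suc k}"
    then have j: "j \<le> Suc k" by simp
    show "a^j * t^(j^2) * EE t a j (Suc k) * ((1 - t^Suc k) / (pt t j * pt t (Suc k - j))) = TA j + TB j"
      unfolding pascal[OF t j] TA_def TB_def by (simp add: distrib_left)
  qed
  also have "\<dots> = (\<Sum>j\<le>Suc k. TA j) + (\<Sum>j\<le>Suc k. TB j)" by (rule sum.distrib)
  also have "(\<Sum>j\<le>Suc k. TA j) = (1 - a * t^Suc k) * HH t a k"
    unfolding HH_def sum_distrib_left by (auto simp: TA_def EE_Suc intro!: sum.cong)
  also have "(\<Sum>j\<le>Suc k. TB j) = (\<Sum>i\<le>k. TB (Suc i))"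
    by (subst sum.atMost_Suc_shift) (simp add: TB_def)
  also have "\<dots> = a * t^Suc k * HH t (a * t) k"
    unfolding HH_def sum_distrib_left
  proof (intro sum.cong refl)
    fix i assume "i \<in> {..k}"
    then have i: "i \<le> k" by simp
    have "TB (Suc i) = (a^(Suc i) * t^((Suc i)^2) * t^(Suc k - Suc i)) * EE t (a*t) i k / (pt t i * pt t (k - i))"
      unfolding TB_def EE_shift by simp
    also have "\<dots> = a * t ^ Suc k * ((a * t) ^ i * t ^ i\<^sup>2 * EE t (a * t) i k / (pt t i * pt t (k - i)))"
      unfolding pow_aux[OF i] by simp
    finally show "TB (Suc i) = a * t ^ Suc k * ((a * t) ^ i * t ^ i\<^sup>2 * EE t (a * t) i k / (pt t i * pt t (k - i)))" .
  qed
  finally have "(1 - t^Suc k) * HH t a (Suc k) = (1 - a * t^Suc k) * (1 / pt t k) + a * t^Suc k * (1 / pt t k)"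
    using Suc.IH by simp
  also have "\<dots> = 1 / pt t k" by (simp add: algebra_simps)
  finally show ?case using ne p[of k] by (simp add: pt_Suc field_simps)
qed

definition GG :: "real \<Rightarrow> real \<Rightarrow> nat \<Rightarrow> real" where
  "GG t a k = a^k * t^(k^2) / (pt t k * EE t a 0 k)"

lemma EE_self[simp]: "EE t a k k = 1" by (simp add: EE_def)

lemma EE_split: "j \<le> k \<Longrightarrow> EE t a 0 k = EE t a 0 j * EE t a j k"
proof (induction k)
  case 0 then show ?case by simp
next
  case (Suc k)
  show ?case
  proof (cases "j = Suc k")
    case True then show ?thesis by simp
  next
    case False then have "j \<le> k" using Suc.prems by simp
    then show ?thesis using Suc.IH by (simp add: EE_Suc)
  qed
qed

lemma Q_eq:
  assumes t: "0 < t" "t < 1" and nz: "EE t a 0 k \<noteq> 0"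
  shows "(\<Sum>j\<le>k. GG t a j / pt t (k - j)) = 1 / (pt t k * EE t a 0 k)"
proof -
  have p: "\<And>n. pt t n > 0" using pt_pos t by blast
  have "(\<Sum>j\<le>k. GG t a j / pt t (k - j)) = (\<Sum>j\<le>k. a^j * t^(j^2) * EE t a j k / (pt t j * pt t (k-j))) / EE t a 0 k"
    unfolding sum_divide_distrib
  proof (intro sum.cong refl)
    fix j assume "j \<in> {..k}"
    then have e: "EE t a 0 k = EE t a 0 j * EE t a j k" by (intro EE_split) simp
    have "EE t a 0 j \<noteq> 0" "EE t a j k \<noteq> 0" using nz unfolding e by auto
    then show "GG t a j / pt t (k - j) = a ^ j * t ^ j\<^sup>2 * EE t a j k / (pt t j * pt t (k - j)) / EE t a 0 k"
      unfolding GG_def e using p[of j] p[of "k-j"] by (simp add: field_simps)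
  qed
  also have "\<dots> = 1 / (pt t k * EE t a 0 k)" using HH_eq[OF t, of a k] unfolding HH_def by simp
  finally show ?thesis .
qed

lemma GG_rec:
  assumes t: "0 < t" "t < 1" and nz: "EE t a 0 k \<noteq> 0" and x: "a^k * t^(k^2) \<noteq> 1"
  shows "GG t a k = a^k * t^(k^2) / (1 - a^k * t^(k^2)) * (\<Sum>j<k. GG t a j / pt t (k - j))"
proof -
  define x where "x = a^k * t^(k^2)"
  have "GG t a k = x * (1 / (pt t k * EE t a 0 k))" unfolding GG_def x_def by simp
  also have "\<dots> = x * (\<Sum>j\<le>k. GG t a j / pt t (k - j))" using Q_eq[OF t nz] by simp
  also have "(\<Sum>j\<le>k. GG t a j / pt t (k - j)) = (\<Sum>j<k. GG t a j / pt t (k - j)) + GG t a k"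
    by (simp add: lessThan_Suc_atMost[symmetric])
  finally have "GG t a k * (1 - x) = x * (\<Sum>j<k. GG t a j / pt t (k - j))" by (simp add: algebra_simps)
  moreover have "1 - x \<noteq> 0" using x unfolding x_def by simp
  ultimately show ?thesis unfolding x_def[symmetric] by (simp add: field_simps)
qed


definition Aset :: "nat \<Rightarrow> nat multiset set" where
  "Aset k = {lam. 0 \<notin># lam \<and> size lam = k}"
definition FF :: "real \<Rightarrow> nat multiset \<Rightarrow> nat \<Rightarrow> real" where
  "FF q lam i = q ^ ((conj_part lam i)\<^sup>2) * qpoch_inv q (mult_part lam i)"
definition den :: "real \<Rightarrow> nat multiset \<Rightarrow> real" where
  "den q lam = (\<Prod>i\<in>{1..Max_mset lam}. FF q lam i)"
definition W :: "real \<Rightarrow> real \<Rightarrow> nat multiset \<Rightarrow> real" where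
  "W u q lam = u ^ psize lam / den q lam"
definition phi :: "nat \<Rightarrow> nat \<times> nat \<times> nat multiset \<Rightarrow> nat multiset" where
  "phi k b = (case b of (a, j, mu) \<Rightarrow> replicate_mset (k - j) a + image_mset (\<lambda>x. x + a) mu)"
definition psi :: "nat \<Rightarrow> nat multiset \<Rightarrow> nat \<times> nat \<times> nat multiset" where
  "psi k lam = (let m = Min_mset lam in
     (m, k - count lam m, image_mset (\<lambda>x. x - m) (filter_mset (\<lambda>x. m < x) lam)))"
definition Tset :: "nat \<Rightarrow> (nat \<times> nat \<times> nat multiset) set" where
  "Tset k = Sigma {1..} (\<lambda>a. Sigma {..<k} Aset)"

lemma FF_big: "(\<forall>x\<in>#lam. x < i) \<Longrightarrow> FF q lam i = 1"
proof -
  assume h: "\<forall>x\<in>#lam. x < i"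
  have "filter_mset ((\<le>) i) lam = {#}" using h by (auto simp: filter_mset_eq_conv)
  then have c: "conj_part lam i = 0" unfolding conj_part_def by simp
  have "count lam i = 0" using h by (auto simp: count_eq_zero_iff)
  then show ?thesis by (simp add: FF_def c mult_part_def qpoch_inv_def)
qed

lemma den_ext:
  assumes "\<forall>x\<in>#lam. x \<le> n"
  shows "(\<Prod>i\<in>{1..n}. FF q lam i) = den q lam"
proof (cases "lam = {#}")
  case True
  then have "\<And>i. FF q lam i = 1" by (intro FF_big) simp
  then show ?thesis by (simp add: den_def)
next
  case False
  have M: "Max_mset lam \<le> n" using assms Min_in_mset False
    by (metis Max_in finite_set_mset set_mset_eq_empty_iff)
  show ?thesis unfolding den_def
  proof (rule prod.mono_neutral_right)
    show "finite {1..n}" by simp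
    show "{1..Max_mset lam} \<subseteq> {1..n}" using M by auto
    show "\<forall>i\<in>{1..n} - {1..Max_mset lam}. FF q lam i = 1"
    proof
      fix i assume "i \<in> {1..n} - {1..Max_mset lam}"
      then have "Max_mset lam < i" by auto
      then show "FF q lam i = 1" by (intro FF_big) (auto dest: Max_ge[rotated, OF _ finite_set_mset])
    qed
  qed
qed

lemma sum_mset_shift: "sum_mset (image_mset (\<lambda>x. x + a) M) = sum_mset M + a * size M"
  by (induction M) auto

lemma mem_le_sum: "x \<in># (M::nat multiset) \<Longrightarrow> x \<le> sum_mset M"
proof -
  assume "x \<in># M"
  then obtain N where "M = add_mset x N" by (blast dest: multi_member_split)
  then show ?thesis by simp
qed

lemma filt_all: "(\<And>x. x \<in># M \<Longrightarrow> P x) \<Longrightarrow> filter_mset P M = M"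
  by (induction M) auto
lemma filt_none: "(\<And>x. x \<in># M \<Longrightarrow> \<not> P x) \<Longrightarrow> filter_mset P M = {#}"
  by (simp add: filter_mset_eq_conv)

context
  fixes a j k :: nat and mu :: "nat multiset"
  assumes a: "1 \<le> a" and j: "j \<le> k" and mu: "mu \<in> Aset j"
begin

private lemma mu0: "x \<in># mu \<Longrightarrow> 1 \<le> x"
  using mu unfolding Aset_def by (cases x) auto

lemma phi_size: "size (phi k (a, j, mu)) = k"
  using mu j by (simp add: phi_def Aset_def)

lemma phi_pos: "0 \<notin># phi k (a, j, mu)"
  using mu a by (auto simp: phi_def Aset_def)

lemma phi_psize: "psize (phi k (a, j, mu)) = k * a + psize mu"
proof -
  have "psize (phi k (a, j, mu)) = (k - j) * a + (psize mu + a * j)"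
    using mu by (simp add: phi_def psize_def sum_mset_shift Aset_def)
  also have "\<dots> = k * a + psize mu" using j by (simp add: algebra_simps diff_mult_distrib)
  finally show ?thesis .
qed

lemma phi_conj_low: "i \<le> a \<Longrightarrow> conj_part (phi k (a, j, mu)) i = k"
proof -
  assume i: "i \<le> a"
  have "filter_mset ((\<le>) i) (phi k (a, j, mu)) = phi k (a, j, mu)"
    using i by (intro filt_all) (auto simp: phi_def split: if_splits)
  then show ?thesis unfolding conj_part_def using phi_size by simp
qed

lemma phi_conj_high: "1 \<le> i \<Longrightarrow> conj_part (phi k (a, j, mu)) (i + a) = conj_part mu i"
proof -
  assume i: "1 \<le> i"
  have "filter_mset ((\<le>) (i + a)) (phi k (a, j, mu)) =
     filter_mset ((\<le>) (i + a)) (replicate_mset (k - j) a) + image_mset (\<lambda>x. x + a) (filter_mset ((\<le>) i) mu)"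
    by (simp add: phi_def filter_mset_image_mset)
  also have "filter_mset ((\<le>) (i + a)) (replicate_mset (k - j) a) = {#}"
    using i by (intro filt_none) (auto split: if_splits)
  finally show ?thesis unfolding conj_part_def by simp
qed

lemma phi_count_low: "i \<le> a \<Longrightarrow> count (phi k (a, j, mu)) i = (if i = a then k - j else 0)"
proof -
  assume i: "i \<le> a"
  have "count (image_mset (\<lambda>x. x + a) mu) i = 0"
    proof (rule ccontr)
    assume "count (image_mset (\<lambda>x. x + a) mu) i \<noteq> 0"
    then obtain x where "x \<in># mu" "x + a = i" by (auto simp: count_eq_zero_iff)
    then show False using mu0[of x] i by simp
  qed
  then show ?thesis by (simp add: phi_def)
qed

lemma phi_count_high: "1 \<le> i \<Longrightarrow> count (phi k (a, j, mu)) (i + a) = count mu i"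
proof -
  assume i: "1 \<le> i"
  have "count (image_mset (\<lambda>x. x + a) mu) (i + a) = size (image_mset (\<lambda>x. x + a) (filter_mset (\<lambda>x. x + a = i + a) mu))"
    unfolding count_conv_size_mset filter_mset_image_mset by simp
  also have "\<dots> = count mu i" unfolding count_conv_size_mset by simp
  finally show ?thesis using i by (simp add: phi_def)
qed


lemma phi_den: "den q (phi k (a, j, mu)) = q ^ (k\<^sup>2 * a) * qpoch_inv q (k - j) * den q mu"
proof -
  define N where "N = psize mu"
  define lam where "lam = phi k (a, j, mu)"
  have bnd: "\<forall>x\<in>#lam. x \<le> a + N"
    unfolding lam_def phi_def N_def psize_def using mem_le_sum by (auto split: if_splits)
  have "den q lam = (\<Prod>i\<in>{1..a+N}. FF q lam i)" using den_ext[OF bnd] by simp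
  also have "{1..a+N} = {1..a} \<union> {1+a..N+a}" by auto
  also have "(\<Prod>i\<in>{1..a} \<union> {1+a..N+a}. FF q lam i) = (\<Prod>i\<in>{1..a}. FF q lam i) * (\<Prod>i\<in>{1+a..N+a}. FF q lam i)"
    by (rule prod.union_disjoint) auto
  also have "(\<Prod>i\<in>{1+a..N+a}. FF q lam i) = (\<Prod>i\<in>{1..N}. FF q lam (i + a))"
    by (rule prod.shift_bounds_cl_nat_ivl)
  also have "\<dots> = (\<Prod>i\<in>{1..N}. FF q mu i)"
    by (intro prod.cong refl) (simp add: FF_def lam_def phi_conj_high mult_part_def phi_count_high)
  also have "\<dots> = den q mu" by (rule den_ext) (simp add: N_def psize_def mem_le_sum)
  also have "(\<Prod>i\<in>{1..a}. FF q lam i) = (\<Prod>i\<in>{1..a}. q ^ (k\<^sup>2) * (if i = a then qpoch_inv q (k - j) else 1))"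
    by (intro prod.cong refl) (simp add: FF_def lam_def phi_conj_low mult_part_def phi_count_low qpoch_inv_def)
  also have "\<dots> = q ^ (k\<^sup>2 * a) * qpoch_inv q (k - j)"
    using a by (simp add: prod.distrib power_mult)
  finally show ?thesis unfolding lam_def .
qed

lemma W_phi: "W u q (phi k (a, j, mu)) = (u^k * (1/q)^(k\<^sup>2))^a / qpoch_inv q (k - j) * W u q mu"
proof -
  have e: "(u^k * (1/q)^(k\<^sup>2))^a = u^(k*a) / q^(k\<^sup>2*a)"
    by (simp add: power_divide power_mult power_one_over)
  show ?thesis unfolding W_def phi_den phi_psize e
    by (simp add: power_add)
qed

end

lemma psi_phi: assumes "b \<in> Tset k" shows "psi k (phi k b) = b"
proof -
  obtain a j mu where b: "b = (a, j, mu)" and a: "1 \<le> a" and j: "j < k" and mu: "mu \<in> Aset j"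
    using assms unfolding Tset_def by auto
  have mu0: "\<And>x. x \<in># mu \<Longrightarrow> 1 \<le> x" using mu unfolding Aset_def by (case_tac x) auto
  define lam where "lam = phi k (a, j, mu)"
  have ain: "a \<in># lam" using j by (simp add: lam_def phi_def)
  have ale: "\<forall>x\<in>#lam. a \<le> x" by (auto simp: lam_def phi_def split: if_splits)
  have m: "Min_mset lam = a" using ain ale by (intro Min_eqI) auto
  have c: "count lam a = k - j" unfolding lam_def using phi_count_low[OF a _ mu, of k a] j by simp
  have f: "filter_mset (\<lambda>x. a < x) lam = image_mset (\<lambda>x. x + a) mu"
  proof -
    have "filter_mset (\<lambda>x. a < x) lam = image_mset (\<lambda>x. x + a) (filter_mset (\<lambda>x. a < x + a) mu)"
      by (simp add: lam_def phi_def filter_mset_image_mset)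
    also have "filter_mset (\<lambda>x. a < x + a) mu = mu" using mu0 by (intro filt_all) fastforce
    finally show ?thesis .
  qed
  have "psi k lam = (a, j, mu)" unfolding psi_def Let_def m c f using j
    by (simp add: multiset.map_comp o_def)
  then show ?thesis unfolding b lam_def .
qed

lemma lam_facts:
  assumes k: "1 \<le> k" and lam: "lam \<in> Aset k"
  defines "m \<equiv> Min_mset lam"
  shows "psi k lam = (m, k - count lam m, image_mset (\<lambda>x. x - m) (filter_mset (\<lambda>x. m < x) lam))"
    and "1 \<le> m" and "1 \<le> count lam m"
    and "lam = replicate_mset (count lam m) m + filter_mset (\<lambda>x. m < x) lam"
    and "k = count lam m + size (filter_mset (\<lambda>x. m < x) lam)"
proof -
  show "psi k lam = (m, k - count lam m, image_mset (\<lambda>x. x - m) (filter_mset (\<lambda>x. m < x) lam))"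
    unfolding psi_def m_def Let_def by simp
  have ne: "lam \<noteq> {#}" using k lam by (auto simp: Aset_def)
  have m_in: "m \<in># lam" unfolding m_def using ne by (rule Min_in_mset)
  have m_le: "\<And>x. x \<in># lam \<Longrightarrow> m \<le> x" unfolding m_def by simp
  have "0 \<notin># lam" using lam by (simp add: Aset_def)
  then have "m \<noteq> 0" using m_in by (cases "m = 0") auto
  then show "1 \<le> m" by simp
  show "1 \<le> count lam m" using m_in by (simp add: Suc_le_eq)
  have "lam = filter_mset (\<lambda>x. x = m) lam + filter_mset (\<lambda>x. \<not> x = m) lam"
    by (rule multiset_partition)
  also have "filter_mset (\<lambda>x. x = m) lam = replicate_mset (count lam m) m" by (rule filter_eq_replicate_mset)
  also have "filter_mset (\<lambda>x. \<not> x = m) lam = filter_mset (\<lambda>x. m < x) lam"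
  proof (rule filter_mset_cong)
    fix x assume "x \<in># lam" then have "m \<le> x" by (rule m_le)
    then show "(x \<noteq> m) = (m < x)" by auto
  qed simp
  finally show d: "lam = replicate_mset (count lam m) m + filter_mset (\<lambda>x. m < x) lam" .
  have "size lam = k" using lam by (simp add: Aset_def)
  then show "k = count lam m + size (filter_mset (\<lambda>x. m < x) lam)"
    by (metis d size_union size_replicate_mset)
qed

lemma psi_in: assumes k: "1 \<le> k" and lam: "lam \<in> Aset k" shows "psi k lam \<in> Tset k"
proof -
  define m where "m = Min_mset lam"
  note f = lam_facts[OF k lam, folded m_def]
  have "image_mset (\<lambda>x. x - m) (filter_mset (\<lambda>x. m < x) lam) \<in> Aset (k - count lam m)"
    unfolding Aset_def using f(5) by auto
  moreover have "k - count lam m < k" using f(3) k by simp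
  ultimately show ?thesis unfolding Tset_def f(1) using f(2) by auto
qed

lemma phi_psi: assumes k: "1 \<le> k" and lam: "lam \<in> Aset k" shows "phi k (psi k lam) = lam"
proof -
  define m where "m = Min_mset lam"
  note f = lam_facts[OF k lam, folded m_def]
  have "k - (k - count lam m) = count lam m" using f(5) by simp
  moreover have "image_mset (\<lambda>x. x + m) (image_mset (\<lambda>x. x - m) (filter_mset (\<lambda>x. m < x) lam)) = filter_mset (\<lambda>x. m < x) lam"
  proof -
    have "image_mset (\<lambda>x. x - m + m) (filter_mset (\<lambda>x. m < x) lam) = image_mset (\<lambda>x. x) (filter_mset (\<lambda>x. m < x) lam)"
      by (intro image_mset_cong) auto
    then show ?thesis by (simp add: multiset.map_comp o_def)
  qed
  ultimately show ?thesis unfolding phi_def f(1) using f(4)[symmetric] by simp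
qed


lemma has_sum_Sigma_nonneg:
  fixes f :: "'a \<times> 'b \<Rightarrow> real"
  assumes "\<And>x. x \<in> A \<Longrightarrow> ((\<lambda>y. f (x, y)) has_sum g x) (B x)" "(g has_sum S) A"
    "\<And>x y. x \<in> A \<Longrightarrow> y \<in> B x \<Longrightarrow> f (x, y) \<ge> 0"
  shows "(f has_sum S) (Sigma A B)"
proof -
  have s: "f summable_on Sigma A B"
    by (rule summable_on_SigmaI[where g = g, OF assms(1) has_sum_imp_summable[OF assms(2)] assms(3)])
  show ?thesis by (rule has_sum_SigmaI[where g = g, OF assms(1,2) s])
qed

lemma qpoch_pt: "qpoch_inv q n = pt (1/q) n"
  unfolding qpoch_inv_def pt_def by (simp add: power_one_over)

lemma qpoch_pos: "1 < q \<Longrightarrow> qpoch_inv q n > 0"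
  unfolding qpoch_pt by (rule pt_pos) auto

lemma den_pos: "1 < q \<Longrightarrow> den q lam > 0"
  unfolding den_def FF_def by (intro prod_pos mult_pos_pos qpoch_pos) auto

lemma W_nonneg: "1 < q \<Longrightarrow> 0 \<le> u \<Longrightarrow> W u q lam \<ge> 0"
  unfolding W_def using den_pos[of q lam] by simp

lemma Aset0: "Aset 0 = {{#}}" by (auto simp: Aset_def)

lemma W_empty: "W u q {#} = 1"
proof -
  have "\<And>i. FF q {#} i = 1" by (intro FF_big) simp
  then show ?thesis by (simp add: W_def den_def psize_def)
qed

lemma main_sum:
  assumes q: "1 < q" and u: "0 < u" "u < 1"
  shows "(W u q has_sum GG (1/q) u k) (Aset k)"
proof (induction k rule: less_induct)
  case (less k)
  define t where "t = 1 / q"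
  have t: "0 < t" "t < 1" using q by (auto simp: t_def)
  show ?case
  proof (cases "k = 0")
    case True
    have "(W u q has_sum sum (W u q) {{#}}) {{#}}" by (rule has_sum_finite) simp
    then show ?thesis using True by (simp add: Aset0 W_empty GG_def)
  next
    case False
    then have k: "1 \<le> k" by simp
    define x where "x = u^k * t^(k\<^sup>2)"
    define C where "C = (\<Sum>j<k. GG t u j / pt t (k - j))"
    define f where "f b = (case b of (a, j, mu) \<Rightarrow> x^a / qpoch_inv q (k - j) * W u q mu)" for b
    have x0: "0 \<le> x" using u t by (simp add: x_def)
    have ukl: "u^k < 1"
    proof -
      obtain m where "k = Suc m" using k by (cases k) auto
      then show ?thesis using u by (simp only: power_Suc_less_one)
    qed
    have tkl: "t^(k\<^sup>2) \<le> 1" using t by (simp add: power_le_one)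
    have x1: "x < 1"
    proof -
      have "u^k * t^(k\<^sup>2) \<le> u^k" using tkl u by (intro mult_left_le) auto
      then show ?thesis unfolding x_def using ukl by linarith
    qed
    have EEnz: "EE t u 0 k \<noteq> 0"
    proof -
      have "EE t u 0 k > 0" unfolding EE_def
      proof (intro prod_pos)
        fix r assume "r \<in> {Suc 0..k}"
        have "t^r \<le> 1" using t by (simp add: power_le_one)
        then have "u * t^r \<le> u" using u by (intro mult_left_le) auto
        then have "u * t^r < 1" using u by linarith
        then show "0 < 1 - u * t^r" by simp
      qed
      then show ?thesis by simp
    qed
    have inner: "((\<lambda>y. f (a, y)) has_sum x^a * C) (Sigma {..<k} Aset)" if a: "a \<in> {1..}" for a
    proof (rule has_sum_Sigma_nonneg)
      show "((\<lambda>mu. f (a, j, mu)) has_sum (x^a / qpoch_inv q (k - j) * GG (1/q) u j)) (Aset j)"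
        if "j \<in> {..<k}" for j
      proof -
        have "((\<lambda>mu. (x^a / qpoch_inv q (k - j)) * W u q mu) has_sum (x^a / qpoch_inv q (k - j)) * GG (1/q) u j) (Aset j)"
          by (rule has_sum_cmult_right) (rule less.IH, use that in simp)
        then show ?thesis unfolding f_def by simp
      qed
      have "(\<Sum>j<k. x^a / qpoch_inv q (k - j) * GG (1/q) u j) = x^a * C"
        unfolding C_def sum_distrib_left qpoch_pt t_def by (simp add: field_simps)
      then show "((\<lambda>j. x^a / qpoch_inv q (k - j) * GG (1/q) u j) has_sum x^a * C) {..<k}"
        by (metis finite_lessThan has_sum_finite)
      show "0 \<le> f (a, j, mu)" for j mu
        unfolding f_def using x0 W_nonneg[OF q, of u mu] u qpoch_pos[OF q, of "k - j"] by simp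
    qed
    have outer: "((\<lambda>a. x^a * C) has_sum x / (1 - x) * C) {1..}"
    proof -
      have "((\<lambda>a. C * x^a) has_sum C * (x / (1 - x))) {1..}"
        by (rule has_sum_cmult_right, rule has_sum_geometric_from_1) (use x0 x1 in simp)
      then show ?thesis by (simp add: mult.commute)
    qed
    have fsum: "(f has_sum x / (1 - x) * C) (Tset k)"
      unfolding Tset_def
    proof (rule has_sum_Sigma_nonneg[OF inner outer])
      show "0 \<le> f (a, y)" if "a \<in> {1..}" "y \<in> Sigma {..<k} Aset" for a y
        using that x0 W_nonneg[OF q, of u] u qpoch_pos[OF q]
        by (auto simp: f_def intro!: divide_nonneg_pos mult_nonneg_nonneg)
    qed
    have G: "GG t u k = x / (1 - x) * C"
      unfolding x_def C_def by (rule GG_rec[OF t EEnz]) (use x1 x_def in simp)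
    have "(W u q has_sum x / (1 - x) * C) (Aset k) = (f has_sum x / (1 - x) * C) (Tset k)"
    proof (rule has_sum_reindex_bij_witness[where i = "phi k" and j = "psi k"])
      show "phi k (psi k lam) = lam" if "lam \<in> Aset k" for lam using phi_psi[OF k that] .
      show "psi k lam \<in> Tset k" if "lam \<in> Aset k" for lam using psi_in[OF k that] .
      show "psi k (phi k b) = b" if "b \<in> Tset k" for b using psi_phi[OF that] .
      show "phi k b \<in> Aset k" if bT: "b \<in> Tset k" for b
      proof -
        obtain a j mu where b: "b = (a, j, mu)" "1 \<le> a" "j < k" "mu \<in> Aset j"
          using bT unfolding Tset_def by auto
        show ?thesis unfolding Aset_def b(1) using phi_size[OF b(2) _ b(4)] phi_pos[OF b(2) _ b(4)] b(3) by simp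
      qed
      show "f (psi k lam) = W u q lam" if lA: "lam \<in> Aset k" for lam
      proof -
        obtain a j mu where b: "psi k lam = (a, j, mu)" "1 \<le> a" "j < k" "mu \<in> Aset j"
          using psi_in[OF k lA] unfolding Tset_def by auto
        have "W u q lam = W u q (phi k (a, j, mu))" using phi_psi[OF k lA] b(1) by simp
        also have "\<dots> = f (a, j, mu)" using W_phi[OF b(2) _ b(4), where u = u and q = q] b(3) unfolding f_def x_def t_def by simp
        finally show ?thesis using b(1) by simp
      qed
    qed simp
    then show ?thesis using fsum G unfolding t_def by simp
  qed
qed


lemma prod_pow_diff:
  assumes q: "q > 0"
  shows "(\<Prod>i<n. q^n - q^i) = q^(n*n) * pt (1/q) n"
proof -
  have "(\<Prod>i<n. q^n - q^i) = (\<Prod>i<n. q^n * (1 - (1/q)^(n - i)))"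
  proof (intro prod.cong refl)
    fix i assume "i \<in> {..<n}"
    then have "n = i + (n - i)" by simp
    then have "q^n = q^i * q^(n-i)" by (metis power_add)
    then show "q^n - q^i = q^n * (1 - (1/q)^(n - i))" using q by (simp add: field_simps power_one_over)
  qed
  also have "\<dots> = q^(n*n) * (\<Prod>i<n. 1 - (1/q)^(n - i))"
    by (simp add: prod.distrib power_mult)
  also have "(\<Prod>i<n. 1 - (1/q)^(n - i)) = (\<Prod>i<n. 1 - (1/q)^(Suc (n - Suc i)))"
    by (intro prod.cong refl) (simp add: Suc_diff_Suc)
  also have "\<dots> = (\<Prod>i<n. 1 - (1/q)^(Suc i))"
    by (rule prod.nat_diff_reindex[where g = "\<lambda>i. 1 - (1/q)^(Suc i)"])
  also have "\<dots> = pt (1/q) n" unfolding pt_def by (simp add: prod.atLeast1_atMost_eq)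
  finally show ?thesis .
qed

lemma aff_eq:
  assumes q: "q > 0" and k: "1 \<le> k"
  shows "(q^k - 1) * affine_order (k - 1) q = q^(k\<^sup>2) * qpoch_inv q k"
proof -
  obtain m where km: "k = Suc m" using k by (cases k) auto
  have "(q^k - 1) * affine_order (k - 1) q = (q^Suc m - q^0) * (\<Prod>i<m. q * (q^m - q^i))"
    unfolding affine_order_def km by (simp add: prod.distrib)
  also have "(\<Prod>i<m. q * (q^m - q^i)) = (\<Prod>i<m. q^Suc m - q^Suc i)"
    by (simp add: algebra_simps)
  also have "(q^Suc m - q^0) * \<dots> = (\<Prod>i<Suc m. q^Suc m - q^i)"
    by (simp only: prod.lessThan_Suc_shift)
  also have "\<dots> = q^(k\<^sup>2) * qpoch_inv q k"
    unfolding prod_pow_diff[OF q] qpoch_pt km by (simp add: power2_eq_square)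
  finally show ?thesis .
qed

lemma fin_alg:
  fixes P a u B Af E :: real
  assumes "a > 0" "Af \<noteq> 0" "E > 0" "u > 0"
  shows "P * a / u * (B * u / (a * Af * E)) = B / Af * (P / E)"
  using assms by (simp add: field_simps)

theorem theorem4p2:
  fixes q u :: real and k :: nat
  assumes "q > 1" and "0 < u" and "u < 1" and "k \<ge> 1"
  shows "(N_uq u q has_sum
           (u ^ (k - 1) / affine_order (k - 1) q *
            (Pinf u q / (\<Prod>r=1..k. 1 - u / q ^ r))))
         {lam. is_partition lam \<and> conj_part lam 1 = k}"
proof -
  note q = assms(1) and u = assms(2,3) and k = assms(4)
  define K where "K = Pinf u q * (q^k - 1) / u"
  have setq: "{lam. is_partition lam \<and> conj_part lam 1 = k} = Aset k"
  proof -
    have "conj_part lam 1 = size lam" if "0 \<notin># lam" for lam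
    proof -
      have "filter_mset ((\<le>) 1) lam = lam" using that by (intro filt_all) (case_tac x, auto)
      then show ?thesis unfolding conj_part_def by simp
    qed
    then show ?thesis unfolding Aset_def is_partition_def by auto
  qed
  have Neq: "N_uq u q lam = K * W u q lam" if lA: "lam \<in> Aset k" for lam
  proof -
    have pos: "0 \<notin># lam" and sz: "size lam = k" using lA by (auto simp: Aset_def)
    have "lam \<noteq> {#}" using sz k by auto
    then obtain y where y: "y \<in># lam" by blast
    have "1 \<le> y" using y pos by (cases y) auto
    moreover have "y \<le> psize lam" unfolding psize_def using y by (rule mem_le_sum)
    ultimately have p1: "1 \<le> psize lam" by simp
    have up: "u ^ (psize lam - 1) = u ^ psize lam / u"
    proof -
      have "u ^ psize lam = u ^ (psize lam - 1) * u" using p1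
        by (metis Suc_diff_le diff_Suc_1 power_Suc2)
      then show ?thesis using u by simp
    qed
    have c1: "conj_part lam 1 = k"
    proof -
      have "filter_mset ((\<le>) 1) lam = lam" using pos by (intro filt_all) (case_tac x, auto)
      then show ?thesis unfolding conj_part_def using sz by simp
    qed
    show ?thesis unfolding N_uq_def K_def W_def den_def FF_def c1 up by (simp add: field_simps)
  qed
  have main: "(W u q has_sum GG (1/q) u k) (Aset k)" by (rule main_sum[OF q u])
  have "((\<lambda>lam. K * W u q lam) has_sum K * GG (1/q) u k) (Aset k)"
    by (rule has_sum_cmult_right[OF main])
  then have hs: "(N_uq u q has_sum K * GG (1/q) u k) (Aset k)"
    by (rule has_sum_cong[THEN iffD1, rotated]) (simp add: Neq)
  have E: "EE (1/q) u 0 k = (\<Prod>r=1..k. 1 - u / q ^ r)"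
    unfolding EE_def by (simp add: power_one_over)
  have Epos: "(\<Prod>r=1..k. 1 - u / q ^ r) > 0"
  proof (intro prod_pos)
    fix r assume "r \<in> {1..k}"
    have "1 \<le> q^r" using q by simp
    then have "u / q^r \<le> u" using u by (simp add: divide_le_eq)  
    then show "0 < 1 - u / q^r" using u by linarith
  qed
  have A: "(q^k - 1) * affine_order (k - 1) q = q^(k\<^sup>2) * qpoch_inv q k" using aff_eq q k by simp
  have pp: "qpoch_inv q k > 0" using qpoch_pos[OF q] .
  have qk: "q^k - 1 > 0" using q k by simp
  have Anz: "affine_order (k - 1) q \<noteq> 0" using A pp qk q by auto
  have uk: "u ^ k = u ^ (k - 1) * u" using k by (metis Suc_diff_le diff_Suc_1 power_Suc2)
  have "K * GG (1/q) u k = u ^ (k - 1) / affine_order (k - 1) q * (Pinf u q / (\<Prod>r=1..k. 1 - u / q ^ r))"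
  proof -
    have "K * GG (1/q) u k = Pinf u q * (q^k - 1) / u * (u^k / (q^(k\<^sup>2) * qpoch_inv q k * (\<Prod>r=1..k. 1 - u / q ^ r)))"
      unfolding K_def GG_def E qpoch_pt by (simp add: power_one_over)
    also have "q^(k\<^sup>2) * qpoch_inv q k = (q^k - 1) * affine_order (k - 1) q" using A by simp
    also have "u^k = u^(k-1) * u" by (rule uk)
    finally show ?thesis using u qk Anz Epos by (simp add: fin_alg)
  qed
  then show ?thesis using hs setq by simp
qed

end
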